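(* Let $G=(V,E)$ be a graph on which LOCAL computation runs. Let $\Omega$ be a finite set with a probability distribution $\mu$. Let $\Phi:\Omega^V\to\mathbb R$, and let $\chi:V\to\{1,\dots,k\}$ be a vertex coloring of $G$ (not necessarily proper), known locally to each vertex. Suppose: - (A1) For any distinct $v,w\in V$ with $\chi(v)=\chi(w)$, $\Phi$ is uncorrelated for $v,w$. - (A2) For every vertex $v$ and all $u,u'\in\Omega$, the value $(D_{v,u,u'}\Phi)(x)$ is determined by $(x_w)_{w\in N[v]}$ and can be computed locally by $v$ from these values. Let $\vec R=(R_v)_{v\in V}$ have independent coordinates $R_v\sim\mu$. Then there is a deterministic LOCAL algorithm running in $O(k)$ rounds that determines values $\vec\rho\in\Omega^V$ (each vertex $v$ learning $\rho_v$) such that $\Phi(\vec\rho)\le\mathbf E[\Phi(\vec R)]$.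
   Context: **Inclusive neighbourhood.** $N[v]=\{v\}\cup\{w:(v,w)\in E\}$. **Derivatives.** For $v\in V$ and $u,u'\in\Omega$, the derivative $D_{v,u,u'}\Phi:\Omega^{V\setminus\{v\}}\to\mathbb R$ is given by $$(D_{v,u,u'}\Phi)(x)=\Phi(x,x_v=u)-\Phi(x,x_v=u'),$$ where $(x,x_v=u)$ is the vector that agrees with $x$ off $v$ and has value $u$ at $v$. **Uncorrelated.** $\Phi$ is uncorrelated for vertices $v,v'$ if for all $u,u'\in\Omega$, the function $D_{v,u,u'}\Phi(x)$ does not depend on $x_{v'}$. **LOCAL model on graphs.** In synchronous rounds, each vertex does unbounded computation and exchanges unbounded messages with its neighbours. Vertices may have additional locally held state on which $\Phi$ may depend. *)

theory Defs
  imports "HOL-Probability.Probability"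
begin

text \<open>Vertex set V = UNIV of a finite type 'v, value set Omega = UNIV of a finite type 'w.
  A graph is a relation E on vertices (symmetric, irreflexive).\<close>

definition nbhd :: "('v \<Rightarrow> 'v \<Rightarrow> bool) \<Rightarrow> 'v \<Rightarrow> 'v set" where
  "nbhd E v = insert v {w. E v w}"

text \<open>Derivative D_{v,u,u'} Phi, evaluated on a full configuration x (the value x v is ignored).\<close>
definition deriv_at :: "(('v \<Rightarrow> 'w) \<Rightarrow> real) \<Rightarrow> 'v \<Rightarrow> 'w \<Rightarrow> 'w \<Rightarrow> ('v \<Rightarrow> 'w) \<Rightarrow> real" where
  "deriv_at Phi v u u' x = Phi (x(v := u)) - Phi (x(v := u'))"

definition uncorrelated :: "(('v \<Rightarrow> 'w) \<Rightarrow> real) \<Rightarrow> 'v \<Rightarrow> 'v \<Rightarrow> bool" where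
  "uncorrelated Phi v v' \<longleftrightarrow>
     (\<forall>u u' x a. deriv_at Phi v u u' (x(v' := a)) = deriv_at Phi v u u' x)"

fun ball_of :: "('v \<Rightarrow> 'v \<Rightarrow> bool) \<Rightarrow> nat \<Rightarrow> 'v \<Rightarrow> 'v set" where
  "ball_of E 0 v = {v}"
| "ball_of E (Suc r) v = ball_of E r v \<union> {w. \<exists>u \<in> ball_of E r v. E u w}"

text \<open>A (deterministic) T-round LOCAL algorithm: it maps a graph E and local inputs inp
  to an output per vertex, and the output of v depends only on the radius-T view of v
  (local inputs of the vertices in the T-ball and the edges incident to them).\<close>
definition local_alg :: "nat \<Rightarrow> (('v \<Rightarrow> 'v \<Rightarrow> bool) \<Rightarrow> ('v \<Rightarrow> 'i) \<Rightarrow> 'v \<Rightarrow> 'o) \<Rightarrow> bool" where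
  "local_alg T A \<longleftrightarrow>
     (\<forall>E E' inp inp' v.
        (\<forall>u \<in> ball_of E T v. inp u = inp' u \<and> (\<forall>w. E u w = E' u w \<and> E w u = E' w u))
        \<longrightarrow> A E inp v = A E' inp' v)"

end

theory Submission
  imports Defs
begin

lemma pair_iter:
  fixes p :: "'a::finite pmf" and q :: "'b::finite pmf" and h :: "'a \<Rightarrow> 'b \<Rightarrow> real"
  shows "measure_pmf.expectation (pair_pmf p q) (\<lambda>x. h (fst x) (snd x))
       = measure_pmf.expectation p (\<lambda>y. measure_pmf.expectation q (h y))"
proof -
  have "measure_pmf.expectation (pair_pmf p q) (\<lambda>x. h (fst x) (snd x))
     = (\<Sum>x\<in>UNIV. h (fst x) (snd x) * pmf (pair_pmf p q) x)"
    by (rule integral_measure_pmf_real) auto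
  also have "\<dots> = (\<Sum>y\<in>UNIV. \<Sum>z\<in>UNIV. h y z * (pmf p y * pmf q z))"
    by (simp only: UNIV_Times_UNIV[symmetric] sum.cartesian_product) (intro sum.cong refl, clarsimp simp: pmf_pair)
  also have "\<dots> = (\<Sum>y\<in>UNIV. (\<Sum>z\<in>UNIV. h y z * pmf q z) * pmf p y)"
    by (simp add: sum_distrib_right sum_distrib_left mult_ac)
  also have "\<dots> = measure_pmf.expectation p (\<lambda>y. measure_pmf.expectation q (h y))"
    by (subst integral_measure_pmf_real[of UNIV]) (auto simp: integral_measure_pmf_real[of UNIV])
  finally show ?thesis .
qed

lemma indep:
  fixes \<mu> :: "'w::finite pmf" and a :: "'v::finite" and g :: "'w \<Rightarrow> ('v \<Rightarrow> 'w) \<Rightarrow> real"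
  assumes inv: "\<And>b R c. g b (R(a:=c)) = g b R"
  shows "measure_pmf.expectation (Pi_pmf UNIV d (\<lambda>_. \<mu>)) (\<lambda>R. g (R a) R)
       = measure_pmf.expectation \<mu> (\<lambda>y. measure_pmf.expectation (Pi_pmf UNIV d (\<lambda>_. \<mu>)) (g y))"
proof -
  define Q where "Q = Pi_pmf (UNIV - {a}) d (\<lambda>_. \<mu>)"
  have P: "Pi_pmf UNIV d (\<lambda>_. \<mu>) = map_pmf (\<lambda>(y,f). f(a:=y)) (pair_pmf \<mu> Q)"
    unfolding Q_def using Pi_pmf_insert[of "UNIV - {a}" a d "\<lambda>_. \<mu>"]
    by (simp add: insert_absorb)
  have 1: "measure_pmf.expectation (Pi_pmf UNIV d (\<lambda>_. \<mu>)) (\<lambda>R. g (R a) R)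
     = measure_pmf.expectation (pair_pmf \<mu> Q) (\<lambda>x. g (fst x) (snd x))"
    unfolding P by (simp add: case_prod_unfold inv)
  have 2: "measure_pmf.expectation (Pi_pmf UNIV d (\<lambda>_. \<mu>)) (g y)
     = measure_pmf.expectation Q (g y)" for y
  proof -
    have "measure_pmf.expectation (Pi_pmf UNIV d (\<lambda>_. \<mu>)) (g y)
       = measure_pmf.expectation (pair_pmf \<mu> Q) (\<lambda>x. g y (snd x))"
      unfolding P by (simp add: case_prod_unfold inv)
    then show ?thesis by simp
  qed
  show ?thesis unfolding 1 2 by (rule pair_iter)
qed

lemma fin_int[simp]: "integrable (measure_pmf (p::('a::finite) pmf)) (f :: 'a \<Rightarrow> real)"
  by (rule integrable_measure_pmf_finite) simp

definition hval :: "'w pmf \<Rightarrow> ('v \<Rightarrow> 'v \<Rightarrow> bool) \<Rightarrow> ('v \<Rightarrow> 'v \<times> nat \<times> ('w \<Rightarrow> 'w \<Rightarrow> ('v \<Rightarrow> 'w) \<Rightarrow> real))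
   \<Rightarrow> nat \<Rightarrow> ('v \<Rightarrow> 'w) \<Rightarrow> 'v \<Rightarrow> 'w \<Rightarrow> real" where
  "hval \<mu> E inp n r v u = measure_pmf.expectation (Pi_pmf UNIV undefined (\<lambda>_. \<mu>))
     (\<lambda>R. snd (snd (inp v)) u undefined (\<lambda>w. if E v w \<and> fst (snd (inp w)) \<le> n then r w else R w))"

primrec rho :: "nat \<Rightarrow> 'w pmf \<Rightarrow> ('v \<Rightarrow> 'v \<Rightarrow> bool) \<Rightarrow> ('v \<Rightarrow> 'v \<times> nat \<times> ('w \<Rightarrow> 'w \<Rightarrow> ('v \<Rightarrow> 'w) \<Rightarrow> real)) \<Rightarrow> 'v \<Rightarrow> 'w" where
  "rho 0 \<mu> E inp = (\<lambda>v. undefined)"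
| "rho (Suc n) \<mu> E inp = (\<lambda>v. if fst (snd (inp v)) = Suc n
     then (SOME u. \<forall>u'. hval \<mu> E inp n (rho n \<mu> E inp) v u \<le> hval \<mu> E inp n (rho n \<mu> E inp) v u')
     else rho n \<mu> E inp v)"

lemma ball_self: "v \<in> ball_of E n v"
  by (induction n) auto

lemma ball_mono: "ball_of E n v \<subseteq> ball_of E (Suc n) v"
  by auto

lemma ball_nb: "E v w \<Longrightarrow> ball_of E n w \<subseteq> ball_of E (Suc n) v"
proof (induction n)
  case 0 then show ?case by auto
next
  case (Suc n)
  then show ?case by (simp only: ball_of.simps) blast
qed

lemma ball_restr: "\<forall>u\<in>B. P u \<Longrightarrow> A \<subseteq> B \<Longrightarrow> \<forall>u\<in>A. P u" by blast

lemma rho_local: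
  "(\<forall>u\<in>ball_of E n v. inp u = inp' u \<and> (\<forall>w. E u w = E' u w \<and> E w u = E' w u))
   \<Longrightarrow> rho n \<mu> E inp v = rho n \<mu> E' inp' v"
proof (induction n arbitrary: v)
  case 0 then show ?case by simp
next
  case (Suc n)
  have H: "\<forall>u\<in>ball_of E (Suc n) v. inp u = inp' u \<and> (\<forall>w. E u w = E' u w \<and> E w u = E' w u)"
    by fact
  have vin: "v \<in> ball_of E (Suc n) v" by (rule ball_self)
  have Hv: "inp v = inp' v \<and> (\<forall>w. E v w = E' v w \<and> E w v = E' w v)"
    using bspec[OF H vin] .
  have Ev: "E v w = E' v w" for w using Hv by simp
  have inpv: "inp v = inp' v" using Hv by simp
  have IHv: "rho n \<mu> E inp v = rho n \<mu> E' inp' v"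
    by (rule Suc.IH, rule ball_restr[OF H ball_mono])
  have nb: "rho n \<mu> E inp w = rho n \<mu> E' inp' w \<and> inp w = inp' w" if "E v w" for w
  proof -
    have sub: "ball_of E n w \<subseteq> ball_of E (Suc n) v" using ball_nb that by metis
    have win: "w \<in> ball_of E (Suc n) v" using sub ball_self by (rule subsetD)
    have "rho n \<mu> E inp w = rho n \<mu> E' inp' w"
      by (rule Suc.IH, rule ball_restr[OF H sub])
    moreover have "inp w = inp' w" using bspec[OF H win] by simp
    ultimately show ?thesis by simp
  qed
  have cfg: "(\<lambda>w. if E v w \<and> fst (snd (inp w)) \<le> n then rho n \<mu> E inp w else R w)
      = (\<lambda>w. if E' v w \<and> fst (snd (inp' w)) \<le> n then rho n \<mu> E' inp' w else R w)" for R
    by (auto simp: fun_eq_iff Ev[symmetric] nb)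
  have hv: "hval \<mu> E inp n (rho n \<mu> E inp) v = hval \<mu> E' inp' n (rho n \<mu> E' inp') v"
    unfolding hval_def fun_eq_iff cfg inpv by simp
  show ?case using IHv inpv hv by simp
qed

lemma deriv_upd: "deriv_at Phi a u u' (x(a:=c)) = deriv_at Phi a u u' x"
  by (simp add: deriv_at_def)

lemma deriv_split: "deriv_at Phi a b c x = deriv_at Phi a b d x - deriv_at Phi a c d x"
  by (simp add: deriv_at_def)

lemma deriv_indep:
  assumes "finite S" "\<forall>w\<in>S. w \<noteq> a \<longrightarrow> uncorrelated Phi a w" "\<forall>w. w \<notin> S \<longrightarrow> x w = x' w"
  shows "deriv_at Phi a u u' x = deriv_at Phi a u u' x'"
  using assms
proof (induction S arbitrary: x rule: finite_induct)
  case empty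
  then have "x = x'" by auto
  then show ?case by simp
next
  case (insert b S)
  define x'' where "x'' = x(b := x' b)"
  have "\<forall>w. w \<notin> S \<longrightarrow> x'' w = x' w" using insert.prems(2) by (auto simp: x''_def)
  then have 1: "deriv_at Phi a u u' x'' = deriv_at Phi a u u' x'"
    using insert.IH insert.prems(1) by blast
  have 2: "deriv_at Phi a u u' x'' = deriv_at Phi a u u' x"
  proof (cases "b = a")
    case True then show ?thesis by (simp add: x''_def deriv_upd)
  next
    case False
    then have "uncorrelated Phi a b" using insert.prems(1) by blast
    then show ?thesis unfolding x''_def uncorrelated_def by blast
  qed
  show ?case using 1 2 by simp
qed

lemma tele:
  assumes "finite C" "\<forall>a\<in>C. \<forall>b\<in>C. a \<noteq> b \<longrightarrow> uncorrelated Phi a b"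
  shows "Phi (\<lambda>w. if w\<in>C then y w else x w) - Phi x = (\<Sum>a\<in>C. deriv_at Phi a (y a) (x a) x)"
  using assms
proof (induction C rule: finite_induct)
  case empty then show ?case by simp
next
  case (insert a C)
  define x' where "x' = (\<lambda>w. if w\<in>C then y w else x w)"
  have e1: "(\<lambda>w. if w\<in>insert a C then y w else x w) = x'(a := y a)"
    using insert.hyps by (auto simp: x'_def fun_eq_iff)
  have e2: "x' = x'(a := x a)" using insert.hyps by (auto simp: x'_def fun_eq_iff)
  have d: "Phi (x'(a := y a)) - Phi x' = deriv_at Phi a (y a) (x a) x'"
    unfolding deriv_at_def by (subst e2) simp
  have "deriv_at Phi a (y a) (x a) x' = deriv_at Phi a (y a) (x a) x"
    by (rule deriv_indep[of C]) (use insert in \<open>auto simp: x'_def\<close>)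
  moreover have "Phi x' - Phi x = (\<Sum>a\<in>C. deriv_at Phi a (y a) (x a) x)"
    using insert by (simp add: x'_def)
  ultimately show ?case using d e1 insert.hyps by simp
qed

lemma ex_min_fin: "\<exists>u. \<forall>u'. (f :: 'w::finite \<Rightarrow> real) u \<le> f u'"
proof -
  have "Min (range f) \<in> range f" by (rule Min_in) auto
  then obtain u where "f u = Min (range f)" by (metis imageE)
  then have "\<forall>u'. f u \<le> f u'" by (auto intro: Min_le)
  then show ?thesis by blast
qed


lemma main:
  fixes \<mu> :: "'w::finite pmf" and E :: "'v::finite \<Rightarrow> 'v \<Rightarrow> bool" and chi :: "'v \<Rightarrow> nat"
    and Phi :: "('v \<Rightarrow> 'w) \<Rightarrow> real"
  assumes irr: "\<forall>v. \<not> E v v" and col: "\<forall>v. chi v \<in> {1..k}"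
    and unc: "\<forall>v w. v \<noteq> w \<and> chi v = chi w \<longrightarrow> uncorrelated Phi v w"
    and loc: "\<forall>v u u' x y. (\<forall>w \<in> nbhd E v. x w = y w) \<longrightarrow> deriv_at Phi v u u' x = deriv_at Phi v u u' y"
  shows "Phi (rho k \<mu> E (\<lambda>v. (v, chi v, deriv_at Phi v)))
     \<le> measure_pmf.expectation (Pi_pmf UNIV undefined (\<lambda>_. \<mu>)) Phi"
proof -
  define inp where "inp = (\<lambda>v. (v, chi v, deriv_at Phi v))"
  define P where "P = (Pi_pmf UNIV (undefined::'w) (\<lambda>_. \<mu>) :: ('v \<Rightarrow> 'w) pmf)"
  define r where "r n = rho n \<mu> E inp" for n
  define X where "X n R = (\<lambda>w. if chi w \<le> n then r n w else R w)" for n and R :: "'v \<Rightarrow> 'w"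
  define F where "F n = measure_pmf.expectation P (\<lambda>R. Phi (X n R))" for n
  define h where "h n a = hval \<mu> E inp n (r n) a" for n a
  have step: "F (Suc n) \<le> F n" for n
  proof -
    define C where "C = {w. chi w = Suc n}"
    have rS: "chi w \<noteq> Suc n \<Longrightarrow> r (Suc n) w = r n w" for w
      by (simp add: r_def inp_def)
    have rC: "chi a = Suc n \<Longrightarrow> r (Suc n) a = (SOME u. \<forall>u'. h n a u \<le> h n a u')" for a
      by (simp add: r_def inp_def h_def)
    have XS: "X (Suc n) R = (\<lambda>w. if w \<in> C then r (Suc n) w else X n R w)" for R
      using rS by (auto simp: X_def C_def fun_eq_iff)
    have uncC: "\<forall>a\<in>C. \<forall>b\<in>C. a \<noteq> b \<longrightarrow> uncorrelated Phi a b"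
      using unc by (auto simp: C_def)
    have pw: "Phi (X (Suc n) R) - Phi (X n R) = (\<Sum>a\<in>C. deriv_at Phi a (r (Suc n) a) (R a) (X n R))" for R
    proof -
      have "Phi (X (Suc n) R) - Phi (X n R) = (\<Sum>a\<in>C. deriv_at Phi a (r (Suc n) a) (X n R a) (X n R))"
        unfolding XS by (rule tele) (use uncC in auto)
      also have "\<dots> = (\<Sum>a\<in>C. deriv_at Phi a (r (Suc n) a) (R a) (X n R))"
        by (intro sum.cong refl) (auto simp: C_def X_def)
      finally show ?thesis .
    qed
    have trm: "measure_pmf.expectation P (\<lambda>R. deriv_at Phi a (r (Suc n) a) (R a) (X n R)) \<le> 0"
      if aC: "a \<in> C" for a
    proof -
      have ca: "chi a = Suc n" using aC by (simp add: C_def)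
      define Z where "Z R = (\<lambda>w. if E a w \<and> chi w \<le> n then r n w else R w)" for R :: "'v \<Rightarrow> 'w"
      have dz: "deriv_at Phi a u u' (X n R) = deriv_at Phi a u u' (Z R)" for u u' R
      proof -
        have "\<forall>w \<in> nbhd E a. X n R w = Z R w"
          using ca irr by (auto simp: nbhd_def X_def Z_def)
        then show ?thesis using loc by blast
      qed
      have hdef: "h n a u = measure_pmf.expectation P (\<lambda>R. deriv_at Phi a u undefined (Z R))" for u
        by (simp add: h_def hval_def inp_def P_def Z_def)
      define \<rho> where "\<rho> = r (Suc n) a"
      have min: "h n a \<rho> \<le> h n a u'" for u'
      proof -
        have "\<forall>u'. h n a (SOME u. \<forall>u'. h n a u \<le> h n a u') \<le> h n a u'"
          by (rule someI_ex, rule ex_min_fin)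
        then show ?thesis by (simp add: \<rho>_def rC[OF ca])
      qed
      have ZU: "Z (R(a := c)) = (Z R)(a := c)" for R c
        using irr by (auto simp: Z_def fun_eq_iff)
      have ind: "measure_pmf.expectation P (\<lambda>R. deriv_at Phi a (R a) undefined (Z R))
         = measure_pmf.expectation \<mu> (h n a)"
        unfolding hdef P_def
        by (rule indep[where g = "\<lambda>b R. deriv_at Phi a b undefined (Z R)"]) (simp add: ZU deriv_upd)
      have "measure_pmf.expectation P (\<lambda>R. deriv_at Phi a (r (Suc n) a) (R a) (X n R))
          = measure_pmf.expectation P (\<lambda>R. deriv_at Phi a \<rho> undefined (Z R) - deriv_at Phi a (R a) undefined (Z R))"
      proof -
        have "(\<lambda>R. deriv_at Phi a (r (Suc n) a) (R a) (X n R))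
           = (\<lambda>R. deriv_at Phi a \<rho> undefined (Z R) - deriv_at Phi a (R a) undefined (Z R))"
          by (rule ext, unfold dz \<rho>_def, rule deriv_split)
        then show ?thesis by simp
      qed
      also have "\<dots> = h n a \<rho> - measure_pmf.expectation \<mu> (h n a)"
        by (simp add: hdef ind Bochner_Integration.integral_diff)
      also have "measure_pmf.expectation \<mu> (h n a) \<ge> measure_pmf.expectation \<mu> (\<lambda>_. h n a \<rho>)"
        by (rule integral_mono) (auto simp: min)
      then have "h n a \<rho> - measure_pmf.expectation \<mu> (h n a) \<le> 0" by simp
      finally show ?thesis .
    qed
    have "F (Suc n) - F n = measure_pmf.expectation P (\<lambda>R. Phi (X (Suc n) R) - Phi (X n R))"
      unfolding F_def by (simp add: Bochner_Integration.integral_diff)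
    also have "\<dots> = (\<Sum>a\<in>C. measure_pmf.expectation P (\<lambda>R. deriv_at Phi a (r (Suc n) a) (R a) (X n R)))"
      unfolding pw by (simp add: Bochner_Integration.integral_sum)
    also have "\<dots> \<le> 0" by (rule sum_nonpos) (use trm in auto)
    finally show ?thesis by simp
  qed
  have Fmono: "F n \<le> F 0" for n
    by (induction n) (use step order_trans in auto)
  have "X 0 R = R" for R
  proof -
    have "chi w \<noteq> 0" for w using col[rule_format, of w] by simp
    then show ?thesis unfolding X_def by (intro ext) (metis le_zero_eq)
  qed
  then have F0: "F 0 = measure_pmf.expectation P Phi" by (simp add: F_def)
  have "X k R = r k" for R using col by (auto simp: X_def fun_eq_iff)
  then have Fk: "F k = Phi (r k)" by (simp add: F_def)
  show ?thesis using Fmono[of k] F0 Fk by (simp add: r_def inp_def P_def)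
qed

theorem lemma3p1:
  fixes \<mu> :: "'w::finite pmf" and k :: nat
  shows "\<exists>T \<le> k. \<exists>A :: ('v::finite \<Rightarrow> 'v \<Rightarrow> bool)
                 \<Rightarrow> ('v \<Rightarrow> 'v \<times> nat \<times> ('w \<Rightarrow> 'w \<Rightarrow> ('v \<Rightarrow> 'w) \<Rightarrow> real)) \<Rightarrow> 'v \<Rightarrow> 'w.
     local_alg T A \<and>
     (\<forall>(E :: 'v \<Rightarrow> 'v \<Rightarrow> bool) (chi :: 'v \<Rightarrow> nat) (Phi :: ('v \<Rightarrow> 'w) \<Rightarrow> real).
        (\<forall>v w. E v w \<longrightarrow> E w v) \<and> (\<forall>v. \<not> E v v) \<and>
        (\<forall>v. chi v \<in> {1..k}) \<and>
        (\<forall>v w. v \<noteq> w \<and> chi v = chi w \<longrightarrow> uncorrelated Phi v w) \<and>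
        (\<forall>v u u' x y. (\<forall>w \<in> nbhd E v. x w = y w) \<longrightarrow> deriv_at Phi v u u' x = deriv_at Phi v u u' y)
        \<longrightarrow> Phi (A E (\<lambda>v. (v, chi v, deriv_at Phi v)))
              \<le> measure_pmf.expectation (Pi_pmf UNIV undefined (\<lambda>_. \<mu>)) Phi)"
proof (intro exI conjI)
  show "k \<le> k" by simp
  show "local_alg k (rho k \<mu>)"
    unfolding local_alg_def by (intro allI impI) (rule rho_local)
  show "\<forall>(E :: 'v \<Rightarrow> 'v \<Rightarrow> bool) (chi :: 'v \<Rightarrow> nat) (Phi :: ('v \<Rightarrow> 'w) \<Rightarrow> real).
        (\<forall>v w. E v w \<longrightarrow> E w v) \<and> (\<forall>v. \<not> E v v) \<and>
        (\<forall>v. chi v \<in> {1..k}) \<and>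
        (\<forall>v w. v \<noteq> w \<and> chi v = chi w \<longrightarrow> uncorrelated Phi v w) \<and>
        (\<forall>v u u' x y. (\<forall>w \<in> nbhd E v. x w = y w) \<longrightarrow> deriv_at Phi v u u' x = deriv_at Phi v u u' y)
        \<longrightarrow> Phi (rho k \<mu> E (\<lambda>v. (v, chi v, deriv_at Phi v)))
              \<le> measure_pmf.expectation (Pi_pmf UNIV undefined (\<lambda>_. \<mu>)) Phi"
    using main by blast
qed

end
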